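(* Let $a>0$, $\alpha>0$, $b\ge 0$, $\sigma^2>0$ and $n>0$ be real numbers. For $s\in(0,n)$ let $V_{\mathrm{FT+PPI}}(s)=\frac{a s^{-\alpha}+b}{n-s}$ and $V_{\mathrm{mean}}=\sigma^2/n$, and define $$q(s)=\sigma^2(n-s)-n\big(a s^{-\alpha}+b\big),\qquad s\in(0,n).$$ Then: (i) there exists $s\in(0,n)$ with $V_{\mathrm{FT+PPI}}(s)<V_{\mathrm{mean}}$ if and only if $\sup_{s\in(0,n)} q(s)>0$; (ii) $q$ is strictly concave on $(0,\infty)$, and there exists $s\in(0,n)$ with $V_{\mathrm{FT+PPI}}(s)<V_{\mathrm{mean}}$ if and only if $$\frac{b}{\sigma^2}<1-\Big(1+\frac1\alpha\Big)\Big(\frac{a\alpha n^{-\alpha}}{\sigma^2}\Big)^{1/(\alpha+1)}.$$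
   Context: Interpretation: $\sigma^2=\mathrm{Var}(Y)$; the residual variance of a predictor fine-tuned on $s$ labeled samples is assumed to follow the scaling law $\mathrm{Var}(Y-f^{(s)}(X))=a s^{-\alpha}+b$; in the regime of infinitely many unlabeled samples the prediction-powered estimator using the remaining $n-s$ labeled samples has variance $V_{\mathrm{FT+PPI}}(s)$, while the sample mean of all $n$ labeled samples has variance $V_{\mathrm{mean}}$. *)

theory Defs
  imports "HOL-Analysis.Analysis"
begin

definition V_FT_PPI :: "real \<Rightarrow> real \<Rightarrow> real \<Rightarrow> real \<Rightarrow> real \<Rightarrow> real" where
  "V_FT_PPI a \<alpha> b n s = (a * s powr (-\<alpha>) + b) / (n - s)"

definition V_mean :: "real \<Rightarrow> real \<Rightarrow> real" where
  "V_mean \<sigma>2 n = \<sigma>2 / n"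

definition q_fun :: "real \<Rightarrow> real \<Rightarrow> real \<Rightarrow> real \<Rightarrow> real \<Rightarrow> real \<Rightarrow> real" where
  "q_fun a \<alpha> b \<sigma>2 n s = \<sigma>2 * (n - s) - n * (a * s powr (-\<alpha>) + b)"

definition strictly_concave_on :: "real set \<Rightarrow> (real \<Rightarrow> real) \<Rightarrow> bool" where
  "strictly_concave_on S f \<longleftrightarrow>
     (\<forall>x\<in>S. \<forall>y\<in>S. \<forall>t::real. x \<noteq> y \<and> 0 < t \<and> t < 1 \<longrightarrow>
        f ((1 - t) * x + t * y) > (1 - t) * f x + t * f y)"

end

theory Submission
  imports Defs
begin

lemma bern:
  fixes al u :: real
  assumes al: "al > 0" and u: "u > 0" "u \<noteq> 1"
  shows "u powr (-al) > 1 - al * (u - 1)"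
proof -
  define h where "h = (\<lambda>x::real. x powr (-al) + al * (x - 1))"
  have der: "DERIV h x :> (- al * x powr (-al - 1) + al)" if "x > 0" for x
    unfolding h_def using that
    by (auto intro!: derivative_eq_intros simp: powr_diff field_simps)
  have cont: "continuous_on {p..r} h" if "p > 0" for p r
    using der that by (intro continuous_at_imp_continuous_on ballI DERIV_isCont[OF der]) auto
  have h1: "h 1 = 1" by (simp add: h_def)
  show ?thesis
  proof (cases "u > 1")
    case True
    have "h 1 < h u"
    proof (rule DERIV_pos_imp_increasing_open[OF True _ cont])
      fix x assume x: "1 < x" "x < u"
      then have "x powr (-al - 1) < 1"
        using al by (simp add: powr_less_one)
      then show "\<exists>y. DERIV h x :> y \<and> y > 0" using der[of x] x al
        by (intro exI[of _ "- al * x powr (-al - 1) + al"]) auto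
    qed simp
    then show ?thesis using h1 by (simp add: h_def)
  next
    case False
    then have u1: "u < 1" using u by simp
    have "h 1 < h u"
    proof (rule DERIV_neg_imp_decreasing_open[OF u1 _ cont])
      fix x assume x: "u < x" "x < 1"
      have "x powr (al + 1) < 1 powr (al + 1)"
        using al u x by (intro powr_less_mono2) auto
      then have lt: "x powr (al + 1) < 1" by simp
      have e: "-al - 1 = -(al+1)" by simp
      have "x powr (-al - 1) = inverse (x powr (al + 1))"
        by (simp only: e powr_minus)
      moreover have "x powr (al + 1) > 0" using u x by simp
      ultimately have "x powr (-al - 1) > 1"
        using lt one_less_inverse by metis
      then show "\<exists>y. DERIV h x :> y \<and> y < 0" using der[of x] x al u
        by (intro exI[of _ "- al * x powr (-al - 1) + al"]) auto
    qed (use u in simp)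
    then show ?thesis using h1 by (simp add: h_def)
  qed
qed
lemma tang:
  fixes al x z :: real
  assumes al: "al > 0" and x: "x > 0" and z: "z > 0"
  shows "x powr (-al) \<ge> z powr (-al) - al * z powr (-al - 1) * (x - z)"
    and "x \<noteq> z \<Longrightarrow> x powr (-al) > z powr (-al) - al * z powr (-al - 1) * (x - z)"
proof -
  define u where "u = x / z"
  have u: "u > 0" using x z by (simp add: u_def)
  have xu: "x = z * u" using z by (simp add: u_def)
  have px: "x powr (-al) = z powr (-al) * u powr (-al)"
    using xu z u by (simp add: powr_mult)
  have pz: "z powr (-al - 1) = z powr (-al) / z"
    using z by (simp add: powr_diff)
  have rhs: "z powr (-al) - al * z powr (-al - 1) * (x - z) = z powr (-al) * (1 - al * (u - 1))"
    using z unfolding pz u_def by (simp add: field_simps)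
  have zp: "z powr (-al) > 0" using z by simp
  show "x powr (-al) \<ge> z powr (-al) - al * z powr (-al - 1) * (x - z)"
  proof (cases "u = 1")
    case True
    then show ?thesis unfolding rhs px by simp
  next
    case False
    then show ?thesis unfolding rhs px using bern[OF al u False] zp by simp
  qed
  assume "x \<noteq> z"
  then have "u \<noteq> 1" using xu by auto
  then show "x powr (-al) > z powr (-al) - al * z powr (-al - 1) * (x - z)"
    unfolding rhs px using bern[OF al u] zp by simp
qed

theorem proposition3:
  fixes a \<alpha> b \<sigma>2 n :: real
  assumes "a > 0" and "\<alpha> > 0" and "b \<ge> 0" and "\<sigma>2 > 0" and "n > 0"
  shows "((\<exists>s\<in>{0<..<n}. V_FT_PPI a \<alpha> b n s < V_mean \<sigma>2 n)
            \<longleftrightarrow> (SUP s\<in>{0<..<n}. q_fun a \<alpha> b \<sigma>2 n s) > 0)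
       \<and> strictly_concave_on {0<..} (q_fun a \<alpha> b \<sigma>2 n)
       \<and> ((\<exists>s\<in>{0<..<n}. V_FT_PPI a \<alpha> b n s < V_mean \<sigma>2 n)
            \<longleftrightarrow> b / \<sigma>2 < 1 - (1 + 1 / \<alpha>) * ((a * \<alpha> * n powr (-\<alpha>)) / \<sigma>2) powr (1 / (\<alpha> + 1)))"
proof -
  note A = assms
  define c where "c = \<sigma>2"
  define q where "q = q_fun a \<alpha> b \<sigma>2 n"
  have qd: "q s = c * (n - s) - n * (a * s powr (-\<alpha>) + b)" for s
    by (simp add: q_def q_fun_def c_def)
  have c: "c > 0" using A by (simp add: c_def)
  have VQ: "V_FT_PPI a \<alpha> b n s < V_mean \<sigma>2 n \<longleftrightarrow> q s > 0" if s: "s \<in> {0<..<n}" for s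
  proof -
    have ns: "n - s > 0" using s by simp
    have "V_FT_PPI a \<alpha> b n s < V_mean \<sigma>2 n \<longleftrightarrow> (a * s powr (-\<alpha>) + b) * n < c * (n - s)"
      unfolding V_FT_PPI_def V_mean_def c_def[symmetric]
      using ns A(5) by (simp add: divide_less_eq less_divide_eq mult.commute mult.left_commute)
    then show ?thesis unfolding qd by (simp add: algebra_simps)
  qed
  have EX: "(\<exists>s\<in>{0<..<n}. V_FT_PPI a \<alpha> b n s < V_mean \<sigma>2 n) \<longleftrightarrow> (\<exists>s\<in>{0<..<n}. q s > 0)"
    using VQ by blast
  have bdd: "bdd_above (q ` {0<..<n})"
  proof (rule bdd_aboveI2)
    fix s assume s: "s \<in> {0<..<n}"
    have "a * s powr (-\<alpha>) \<ge> 0" using A by simp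
    then show "q s \<le> c * n" unfolding qd using s c A by (simp add: algebra_simps)
  qed
  have P1: "(\<exists>s\<in>{0<..<n}. V_FT_PPI a \<alpha> b n s < V_mean \<sigma>2 n)
            \<longleftrightarrow> (SUP s\<in>{0<..<n}. q_fun a \<alpha> b \<sigma>2 n s) > 0"
    unfolding EX q_def[symmetric] using less_cSUP_iff[OF _ bdd, of 0] A(5) by simp
  have P2: "strictly_concave_on {0<..} q"
    unfolding strictly_concave_on_def
  proof (intro ballI allI impI)
    fix x y t :: real
    assume x: "x \<in> {0<..}" and y: "y \<in> {0<..}" and h: "x \<noteq> y \<and> 0 < t \<and> t < 1"
    define z where "z = (1 - t) * x + t * y"
    have x0: "x > 0" and y0: "y > 0" using x y by auto
    have z0: "z > 0" unfolding z_def using x0 y0 h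
      by (intro add_pos_pos mult_pos_pos) auto
    have xz: "x \<noteq> z" unfolding z_def using h by (auto simp: algebra_simps)
    have yz: "y \<noteq> z"
    proof -
      have "y - z = (1 - t) * (y - x)" unfolding z_def by (simp add: algebra_simps)
      then show ?thesis using h by auto
    qed
    define K where "K = \<alpha> * z powr (-\<alpha> - 1)"
    have tx: "x powr (-\<alpha>) > z powr (-\<alpha>) - K * (x - z)"
      using tang(2)[OF A(2) x0 z0 xz] by (simp add: K_def)
    have ty: "y powr (-\<alpha>) > z powr (-\<alpha>) - K * (y - z)"
      using tang(2)[OF A(2) y0 z0 yz] by (simp add: K_def)
    have sum0: "(1 - t) * (x - z) + t * (y - z) = 0" unfolding z_def by (simp add: algebra_simps)
    have "(1 - t) * (z powr (-\<alpha>) - K * (x - z)) + t * (z powr (-\<alpha>) - K * (y - z)) <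
          (1 - t) * x powr (-\<alpha>) + t * y powr (-\<alpha>)"
      using tx ty h by (intro add_strict_mono mult_strict_left_mono) auto
    moreover have "(1 - t) * (z powr (-\<alpha>) - K * (x - z)) + t * (z powr (-\<alpha>) - K * (y - z))
       = z powr (-\<alpha>) - K * ((1 - t) * (x - z) + t * (y - z))"
      by (simp add: algebra_simps)
    ultimately have key: "(1 - t) * x powr (-\<alpha>) + t * y powr (-\<alpha>) > z powr (-\<alpha>)"
      using sum0 by simp
    have na: "n * a > 0" using A by simp
    have "q z - ((1 - t) * q x + t * q y) =
          n * a * ((1 - t) * x powr (-\<alpha>) + t * y powr (-\<alpha>) - z powr (-\<alpha>))"
      unfolding qd z_def by (simp add: algebra_simps)
    also have "\<dots> > 0" using key na by simp
    finally show "q ((1 - t) * x + t * y) > (1 - t) * q x + t * q y"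
      unfolding z_def by simp
  qed
  define K where "K = n * \<alpha> * a / c"
  define p where "p = 1 / (\<alpha> + 1)"
  define ss where "ss = K powr p"
  have K0: "K > 0" using A c by (simp add: K_def)
  have ss0: "ss > 0" using K0 by (simp add: ss_def)
  have p1: "p * (\<alpha> + 1) = 1" using A by (simp add: p_def)
  have ssp: "ss powr (\<alpha> + 1) = K"
    unfolding ss_def powr_powr p1 using K0 by simp
  have e: "-\<alpha> - 1 = -(\<alpha>+1)" by simp
  have ssm: "ss powr (-\<alpha> - 1) = inverse K"
    by (simp only: e powr_minus ssp)
  have F2: "\<alpha> * ss powr (-\<alpha> - 1) * (n * a) = c"
    unfolding ssm K_def using A c by (simp add: field_simps)
  have F3: "q s \<le> q ss" if s: "s > 0" for s
  proof -
    have t: "s powr (-\<alpha>) \<ge> ss powr (-\<alpha>) - \<alpha> * ss powr (-\<alpha> - 1) * (s - ss)"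
      using tang(1)[OF A(2) s ss0] .
    have na: "n * a > 0" using A by simp
    have "n * a * s powr (-\<alpha>) \<ge> n * a * (ss powr (-\<alpha>) - \<alpha> * ss powr (-\<alpha> - 1) * (s - ss))"
      using t na by (intro mult_left_mono) auto
    also have "n * a * (ss powr (-\<alpha>) - \<alpha> * ss powr (-\<alpha> - 1) * (s - ss)) =
               n * a * ss powr (-\<alpha>) - (\<alpha> * ss powr (-\<alpha> - 1) * (n * a)) * (s - ss)"
      by (simp add: algebra_simps)
    finally have "n * a * s powr (-\<alpha>) \<ge> n * a * ss powr (-\<alpha>) - c * (s - ss)"
      unfolding F2 .
    then show ?thesis unfolding qd by (simp add: algebra_simps)
  qed
  have F4a: "n * a * ss powr (-\<alpha>) = c / \<alpha> * ss"
  proof -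
    have "ss powr (-\<alpha>) = ss powr (-\<alpha> - 1) * ss"
      using ss0 by (simp add: powr_diff)
    then have "n * a * ss powr (-\<alpha>) = (\<alpha> * ss powr (-\<alpha> - 1) * (n * a)) / \<alpha> * ss"
      using A by (simp add: field_simps)
    then show ?thesis unfolding F2 .
  qed
  have F4: "q ss = c * n - c * (1 + 1 / \<alpha>) * ss - n * b"
    unfolding qd using F4a by (simp add: algebra_simps)
  have F5: "ss / n = ((a * \<alpha> * n powr (-\<alpha>)) / \<sigma>2) powr (1 / (\<alpha> + 1))"
  proof -
    have "n = (n powr (\<alpha> + 1)) powr p" unfolding powr_powr using p1 A by (simp add: mult.commute)
    then have "ss / n = (K / n powr (\<alpha> + 1)) powr p"
      unfolding ss_def using A K0 by (metis powr_divide powr_ge_zero less_imp_le)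
    also have "K / n powr (\<alpha> + 1) = (a * \<alpha> * n powr (-\<alpha>)) / \<sigma>2"
      unfolding K_def c_def using A by (simp add: powr_add powr_minus field_simps)
    finally show ?thesis by (simp add: p_def)
  qed
  have cond: "b / \<sigma>2 < 1 - (1 + 1 / \<alpha>) * ((a * \<alpha> * n powr (-\<alpha>)) / \<sigma>2) powr (1 / (\<alpha> + 1))
              \<longleftrightarrow> q ss > 0"
  proof -
    have "b / \<sigma>2 < 1 - (1 + 1 / \<alpha>) * ((a * \<alpha> * n powr (-\<alpha>)) / \<sigma>2) powr (1 / (\<alpha> + 1))
          \<longleftrightarrow> b / c < 1 - (1 + 1 / \<alpha>) * (ss / n)" unfolding F5 c_def ..
    also have "\<dots> \<longleftrightarrow> n * b < c * n - c * (1 + 1 / \<alpha>) * ss"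
      using c A(5) by (simp add: field_simps)
    also have "\<dots> \<longleftrightarrow> q ss > 0" unfolding F4 by simp
    finally show ?thesis .
  qed
  have P3: "(\<exists>s\<in>{0<..<n}. V_FT_PPI a \<alpha> b n s < V_mean \<sigma>2 n)
            \<longleftrightarrow> b / \<sigma>2 < 1 - (1 + 1 / \<alpha>) * ((a * \<alpha> * n powr (-\<alpha>)) / \<sigma>2) powr (1 / (\<alpha> + 1))"
    unfolding EX cond
  proof
    assume "\<exists>s\<in>{0<..<n}. q s > 0"
    then obtain s where "s \<in> {0<..<n}" "q s > 0" by blast
    then show "q ss > 0" using F3[of s] by simp
  next
    assume qs: "q ss > 0"
    have "c * (1 + 1 / \<alpha>) * ss \<ge> c * ss"
    proof -
      have "c * (1 + 1 / \<alpha>) * ss = c * ss + c * ss / \<alpha>" by (simp add: algebra_simps)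
      moreover have "c * ss / \<alpha> \<ge> 0" using c ss0 A(2) by simp
      ultimately show ?thesis by simp
    qed
    then have "c * ss < c * n" using qs A(3) A(5) unfolding F4
      by (smt (verit) mult_nonneg_nonneg)
    then have "ss < n" using c by simp
    then show "\<exists>s\<in>{0<..<n}. q s > 0" using qs ss0 by auto
  qed
  show ?thesis using P1 P2 P3 by (simp add: q_def)
qed

end
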